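(* Let $\alpha\in(0,1)$ and let $\hat q_\alpha=\min\{u:\hat F_{\varepsilon^2}(u)\ge\alpha\}$ be the empirical $\alpha$-quantile of $\tilde\varepsilon_1^2,\dots,\tilde\varepsilon_d^2$. Then \[ \mathbf E(\hat q_\alpha^2)\le1+\frac{8}{(1-\alpha)\sqrt{2\pi}}. \]
   Context: $\boldsymbol\varepsilon=(\varepsilon_1,\dots,\varepsilon_d)\sim\mathcal N(0,\boldsymbol\Sigma)$, where $\boldsymbol\Sigma$ is a covariance matrix with positive diagonal entries $\sigma_i^2$ (arbitrary correlations). $\tilde\varepsilon_i=\varepsilon_i/\sigma_i$ (each standard normal), and $\hat F_{\varepsilon^2}(u)=\frac1d\#\{i:\tilde\varepsilon_i^2\le u\}$ is the empirical c.d.f. of $\tilde\varepsilon_1^2,\dots,\tilde\varepsilon_d^2$. *)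

theory Defs
  imports "HOL-Probability.Probability"
begin

text \<open>A centered Gaussian random vector (X 0, ..., X (d-1)) on the probability
space M with arbitrary (possibly singular) covariance: every linear combination
of the coordinates is either almost surely zero or a centered normal variable.\<close>
definition centered_gaussian_vector ::
  "'a measure \<Rightarrow> nat \<Rightarrow> (nat \<Rightarrow> 'a \<Rightarrow> real) \<Rightarrow> bool" where
  "centered_gaussian_vector M d X \<longleftrightarrow>
     (\<forall>i<d. X i \<in> borel_measurable M) \<and>
     (\<forall>c :: nat \<Rightarrow> real.
        (AE \<omega> in M. (\<Sum>i<d. c i * X i \<omega>) = 0) \<or>
        (\<exists>s>0. distributed M lborel (\<lambda>\<omega>. \<Sum>i<d. c i * X i \<omega>) (normal_density 0 s)))"

definition emp_cdf :: "nat \<Rightarrow> (nat \<Rightarrow> real) \<Rightarrow> real \<Rightarrow> real" where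
  "emp_cdf d x u = real (card {i\<in>{..<d}. x i \<le> u}) / real d"

definition emp_quantile :: "nat \<Rightarrow> (nat \<Rightarrow> real) \<Rightarrow> real \<Rightarrow> real" where
  "emp_quantile d x \<alpha> = (LEAST u::real. \<alpha> \<le> emp_cdf d x u)"

end

theory Submission
  imports Defs
begin

lemma quantile_bound:
  fixes Y :: "nat \<Rightarrow> real"
  assumes d: "d \<ge> 1" and Y0: "\<And>i. i < d \<Longrightarrow> Y i \<ge> 0" and a0: "0 < \<alpha>" and a1: "\<alpha> < 1"
  shows "(emp_quantile d Y \<alpha>)\<^sup>2 \<le> (\<Sum>i<d. (Y i)\<^sup>2) / ((1-\<alpha>) * d)"
proof -
  define P where "P = (\<lambda>u. \<alpha> \<le> emp_cdf d Y u)"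
  have cdf: "emp_cdf d Y u = card {i\<in>{..<d}. Y i \<le> u} / d" for u by (simp add: emp_cdf_def)
  define S where "S = Y ` {..<d}"
  have Sfin: "finite S" and Sne: "S \<noteq> {}" using d by (auto simp: S_def lessThan_empty_iff)
  define T where "T = {y\<in>S. P y}"
  have "P (Max S)"
  proof -
    have "{i\<in>{..<d}. Y i \<le> Max S} = {..<d}" using Sfin by (auto simp: S_def)
    then show ?thesis using d a1 by (simp add: P_def cdf)
  qed
  hence "Max S \<in> T" using Max_in[OF Sfin Sne] by (simp add: T_def)
  hence Tne: "T \<noteq> {}" and Tfin: "finite T" using Sfin by (auto simp: T_def)
  define m where "m = Min T"
  have mT: "m \<in> T" using Tne Tfin by (simp add: m_def)
  have key: "m \<le> u" if "P u" for u
  proof (rule ccontr)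
    assume "\<not> m \<le> u"
    define A where "A = {i\<in>{..<d}. Y i \<le> u}"
    have "card A > 0"
    proof (rule ccontr)
      assume "\<not> card A > 0" then have "card A = 0" by simp
      have "\<alpha> \<le> card A / d" using that by (simp add: P_def cdf A_def)
      with \<open>card A = 0\<close> a0 show False by simp
    qed
    then have Ane: "A \<noteq> {}" and Afin: "finite A" unfolding card_gt_0_iff by auto
    define y where "y = Max (Y ` A)"
    have yS: "y \<in> S" using Ane Afin unfolding y_def S_def A_def
      by (metis (no_types, lifting) Max_in finite_imageI image_is_empty image_mono mem_Collect_eq subsetD subsetI)
    have yu: "y \<le> u" using Ane Afin unfolding y_def A_def by auto
    have "{i\<in>{..<d}. Y i \<le> y} = A" using Afin yu unfolding y_def A_def by auto
    then have "P y" using that by (simp add: P_def cdf A_def)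
    then have "y \<in> T" using yS by (simp add: T_def)
    then have "m \<le> y" using Tfin by (simp add: m_def)
    then show False using yu \<open>\<not> m \<le> u\<close> by simp
  qed
  have q: "emp_quantile d Y \<alpha> = m"
    unfolding emp_quantile_def
    by (rule Least_equality) (use mT key in \<open>auto simp: T_def P_def\<close>)
  have m0: "m \<ge> 0" using mT Y0 by (auto simp: T_def S_def)
  define A where "A = {i\<in>{..<d}. Y i < m}"
  define B where "B = {i\<in>{..<d}. Y i \<ge> m}"
  have Afin: "finite A" and Bfin: "finite B" by (auto simp: A_def B_def)
  have AB: "A \<union> B = {..<d}" "A \<inter> B = {}" by (auto simp: A_def B_def)
  have cardAB: "card A + card B = d"
    using card_Un_disjoint[OF Afin Bfin AB(2)] AB(1) by simp
  have cA: "real (card A) < \<alpha> * d"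
  proof (cases "A = {}")
    case True then show ?thesis using a0 d by simp
  next
    case False
    define y where "y = Max (Y ` A)"
    have ym: "y < m" using False Afin unfolding y_def A_def by auto
    have "{i\<in>{..<d}. Y i \<le> y} = A" using Afin ym unfolding y_def A_def by auto
    moreover have "\<not> P y" using key ym by force
    ultimately have "card A / d < \<alpha>" by (simp add: P_def cdf)
    then show ?thesis using d by (simp add: field_simps)
  qed
  have rAB: "real (card A) + real (card B) = real d" using cardAB of_nat_add by metis
  have cB: "(1-\<alpha>) * d < card B" using cA rAB by (simp add: algebra_simps)
  have "card B * m\<^sup>2 = (\<Sum>i\<in>B. m\<^sup>2)" by simp
  also have "\<dots> \<le> (\<Sum>i\<in>B. (Y i)\<^sup>2)"
    by (rule sum_mono) (use m0 in \<open>auto simp: B_def intro: power_mono\<close>)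
  also have "\<dots> \<le> (\<Sum>i<d. (Y i)\<^sup>2)"
    by (rule sum_mono2) (auto simp: B_def)
  finally have "card B * m\<^sup>2 \<le> (\<Sum>i<d. (Y i)\<^sup>2)" .
  moreover have "(1-\<alpha>) * d * m\<^sup>2 \<le> card B * m\<^sup>2"
    using cB by (intro mult_right_mono) auto
  ultimately have "(1-\<alpha>) * d * m\<^sup>2 \<le> (\<Sum>i<d. (Y i)\<^sup>2)" by linarith
  moreover have "(1-\<alpha>) * d > 0" using a1 d by simp
  ultimately show ?thesis unfolding q by (simp add: field_simps mult.commute)
qed
lemma fourth_moment:
  fixes M :: "'a measure" and X :: "'a \<Rightarrow> real" and s :: real
  assumes s: "s > 0" and D: "distributed M lborel X (normal_density 0 s)"
  shows "(\<integral>\<^sup>+ \<omega>. ennreal (((X \<omega> / s)\<^sup>2)\<^sup>2) \<partial>M) = 3"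
proof -
  have hb: "has_bochner_integral lborel (\<lambda>x. normal_density 0 s x * (x - 0) ^ (2 * 2)) (fact (2 * 2) / ((2 / s\<^sup>2)^2 * fact 2))"
    by (rule normal_moment_even) (use s in auto)
  have v: "fact (2 * 2) / ((2 / s\<^sup>2)^2 * fact 2) = 3 * s^4"
    using s by (simp add: fact_numeral field_simps power2_eq_square power4_eq_xxxx)
  have hb2: "has_bochner_integral lborel (\<lambda>x. normal_density 0 s x * ((x / s)\<^sup>2)\<^sup>2) 3"
  proof -
    have "has_bochner_integral lborel (\<lambda>x. (normal_density 0 s x * (x - 0) ^ (2 * 2)) / s^4) (3 * s^4 / s^4)"
      using has_bochner_integral_divide_zero[OF hb[unfolded v], of "s^4"] by simp
    moreover have "(\<lambda>x. (normal_density 0 s x * (x - 0) ^ (2 * 2)) / s^4) = (\<lambda>x. normal_density 0 s x * ((x / s)\<^sup>2)\<^sup>2)"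
      by (auto simp: field_simps power_divide simp flip: power_mult)
    ultimately show ?thesis using s by simp
  qed
  have "(\<integral>\<^sup>+x. ennreal (normal_density 0 s x * ((x / s)\<^sup>2)\<^sup>2) \<partial>lborel) = ennreal 3"
  proof -
    have "integrable lborel (\<lambda>x. normal_density 0 s x * ((x / s)\<^sup>2)\<^sup>2)" and
      "integral\<^sup>L lborel (\<lambda>x. normal_density 0 s x * ((x / s)\<^sup>2)\<^sup>2) = 3"
      using hb2 by (auto simp: has_bochner_integral_iff)
    moreover have "AE x in lborel. 0 \<le> normal_density 0 s x * ((x / s)\<^sup>2)\<^sup>2"
      by (simp add: normal_density_nonneg)
    ultimately show ?thesis using nn_integral_eq_integral[of lborel "\<lambda>x. normal_density 0 s x * ((x / s)\<^sup>2)\<^sup>2"] by simp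
  qed
  moreover have "(\<integral>\<^sup>+x. ennreal (normal_density 0 s x) * ennreal (((x / s)\<^sup>2)\<^sup>2) \<partial>lborel) = (\<integral>\<^sup>+ \<omega>. ennreal (((X \<omega> / s)\<^sup>2)\<^sup>2) \<partial>M)"
    by (rule distributed_nn_integral[OF D]) simp
  ultimately show ?thesis by (simp add: ennreal_mult[symmetric])
qed

theorem lemma3:
  fixes M :: "'a measure" and d :: nat and \<epsilon> :: "nat \<Rightarrow> 'a \<Rightarrow> real"
    and \<sigma> :: "nat \<Rightarrow> real" and \<alpha> :: real
  assumes "prob_space M"
    and "d \<ge> 1"
    and "centered_gaussian_vector M d \<epsilon>"
    and "\<And>i. i < d \<Longrightarrow> \<sigma> i > 0"
    and "\<And>i. i < d \<Longrightarrow> distributed M lborel (\<epsilon> i) (normal_density 0 (\<sigma> i))"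
    and "0 < \<alpha>" and "\<alpha> < 1"
  shows "(\<integral>\<^sup>+ \<omega>. ennreal ((emp_quantile d (\<lambda>i. (\<epsilon> i \<omega> / \<sigma> i)\<^sup>2) \<alpha>)\<^sup>2) \<partial>M)
           \<le> ennreal (1 + 8 / ((1 - \<alpha>) * sqrt (2 * pi)))"
proof -
  define c where "c = 1 / ((1 - \<alpha>) * real d)"
  have c0: "c \<ge> 0" using assms(7) by (simp add: c_def)
  have "(\<integral>\<^sup>+ \<omega>. ennreal ((emp_quantile d (\<lambda>i. (\<epsilon> i \<omega> / \<sigma> i)\<^sup>2) \<alpha>)\<^sup>2) \<partial>M)
      \<le> (\<integral>\<^sup>+ \<omega>. ennreal c * (\<Sum>i<d. ennreal (((\<epsilon> i \<omega> / \<sigma> i)\<^sup>2)\<^sup>2)) \<partial>M)"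
  proof (rule nn_integral_mono)
    fix \<omega>
    have "(emp_quantile d (\<lambda>i. (\<epsilon> i \<omega> / \<sigma> i)\<^sup>2) \<alpha>)\<^sup>2 \<le> (\<Sum>i<d. ((\<epsilon> i \<omega> / \<sigma> i)\<^sup>2)\<^sup>2) / ((1-\<alpha>) * d)"
      by (rule quantile_bound) (use assms in auto)
    also have "\<dots> = c * (\<Sum>i<d. ((\<epsilon> i \<omega> / \<sigma> i)\<^sup>2)\<^sup>2)" by (simp add: c_def)
    finally have "ennreal ((emp_quantile d (\<lambda>i. (\<epsilon> i \<omega> / \<sigma> i)\<^sup>2) \<alpha>)\<^sup>2) \<le> ennreal (c * (\<Sum>i<d. ((\<epsilon> i \<omega> / \<sigma> i)\<^sup>2)\<^sup>2))"
      by (rule ennreal_leI)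
    also have "\<dots> = ennreal c * (\<Sum>i<d. ennreal (((\<epsilon> i \<omega> / \<sigma> i)\<^sup>2)\<^sup>2))"
      using c0 by (simp add: ennreal_mult sum_nonneg)
    finally show "ennreal ((emp_quantile d (\<lambda>i. (\<epsilon> i \<omega> / \<sigma> i)\<^sup>2) \<alpha>)\<^sup>2) \<le> ennreal c * (\<Sum>i<d. ennreal (((\<epsilon> i \<omega> / \<sigma> i)\<^sup>2)\<^sup>2))" .
  qed
  also have "\<dots> = ennreal c * (\<Sum>i<d. (\<integral>\<^sup>+ \<omega>. ennreal (((\<epsilon> i \<omega> / \<sigma> i)\<^sup>2)\<^sup>2) \<partial>M))"
  proof -
    have meas: "\<epsilon> i \<in> borel_measurable M" if "i < d" for i
      using distributed_measurable[OF assms(5)[OF that]] by simp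
    have m2: "(\<lambda>\<omega>. \<Sum>i<d. ennreal (((\<epsilon> i \<omega> / \<sigma> i)\<^sup>2)\<^sup>2)) \<in> borel_measurable M"
      by (rule borel_measurable_sum) (use meas in auto)
    have s: "(\<integral>\<^sup>+ \<omega>. (\<Sum>i<d. ennreal (((\<epsilon> i \<omega> / \<sigma> i)\<^sup>2)\<^sup>2)) \<partial>M) = (\<Sum>i<d. (\<integral>\<^sup>+ \<omega>. ennreal (((\<epsilon> i \<omega> / \<sigma> i)\<^sup>2)\<^sup>2) \<partial>M))"
      by (rule nn_integral_sum) (use meas in auto)
    show ?thesis
      by (simp only: nn_integral_cmult[OF m2] s)
  qed
  also have "\<dots> = ennreal c * (\<Sum>i<d. 3)"
    using fourth_moment[OF assms(4) assms(5)] by simp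
  also have "\<dots> = ennreal (3 / (1 - \<alpha>))"
  proof -
    have "(\<Sum>i<d. (3::ennreal)) = ennreal (3 * real d)"
      by (simp add: ennreal_mult ennreal_of_nat_eq_real_of_nat mult.commute)
    moreover have "c * (3 * real d) = 3 / (1 - \<alpha>)"
      using assms(2,7) by (simp add: c_def field_simps)
    ultimately show ?thesis using c0 by (simp add: ennreal_mult[symmetric])
  qed
  also have "\<dots> \<le> ennreal (1 + 8 / ((1 - \<alpha>) * sqrt (2 * pi)))"
  proof (rule ennreal_leI)
    have "sqrt (2 * pi) \<le> 8 / 3"
    proof (rule real_sqrt_le_iff[THEN iffD2, of _ "(8/3)\<^sup>2", unfolded real_sqrt_abs, THEN order_trans])
      show "2 * pi \<le> (8/3)\<^sup>2" using pi_approx(2) by (simp add: power2_eq_square)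
    qed simp
    then have h: "3 \<le> 8 / sqrt (2 * pi)" by (simp add: field_simps)
    define b where "b = 8 / sqrt (2 * pi)"
    have pos: "1 - \<alpha> > 0" using assms(7) by simp
    have e: "8 / ((1 - \<alpha>) * sqrt (2 * pi)) = b / (1 - \<alpha>)" by (simp add: b_def)
    have "3 \<le> (1 - \<alpha>) + b" using h assms(6,7) by (simp add: b_def)
    then have "3 / (1 - \<alpha>) \<le> ((1 - \<alpha>) + b) / (1 - \<alpha>)" using pos by (intro divide_right_mono) auto
    also have "\<dots> = 1 + b / (1 - \<alpha>)" using pos by (simp add: add_divide_distrib)
    finally have "3 / (1 - \<alpha>) \<le> 1 + b / (1 - \<alpha>)" .
    then show "3 / (1 - \<alpha>) \<le> 1 + 8 / ((1 - \<alpha>) * sqrt (2 * pi))" by (simp only: e)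
  qed
  finally show ?thesis .
qed

end
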